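(* Let $X$ be a Baire space, $Y$ a first countable topological space, $(Z,d)$ a metric space and $f:X\times Y\to Z$ a mapping. Suppose that for each $x\in X$, $f_x$ is continuous and $f^y$ is quasicontinuous at $x$ for every $y$ in a dense set $D_x\subset Y$. Then for each $y\in Y$ there is a residual set $R_y\subset X$ such that $f$ is continuous at every point of $R_y\times\{y\}$.
   Context: $f_x(y)=f^y(x)=f(x,y)$. A mapping $g:X\to Z$ is quasicontinuous at $a$ if for each neighborhood $U$ of $a$ and each neighborhood $W$ of $g(a)$ there is an open $O$ with $\emptyset\ne O\subset U$ and $g(O)\subset W$. Residual means containing a countable intersection of dense open sets. *)

theory Defs
  imports "HOL-Analysis.Analysis"
begin

definition baire_space :: "'a::topological_space itself \<Rightarrow> bool" where
  "baire_space _ \<longleftrightarrow>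
     (\<forall>\<F>::'a set set. countable \<F> \<and> (\<forall>U\<in>\<F>. open U \<and> closure U = UNIV)
        \<longrightarrow> closure (\<Inter>\<F>) = UNIV)"

definition residual :: "'a::topological_space set \<Rightarrow> bool" where
  "residual R \<longleftrightarrow>
     (\<exists>\<F>::'a set set. countable \<F> \<and> (\<forall>U\<in>\<F>. open U \<and> closure U = UNIV) \<and> \<Inter>\<F> \<subseteq> R)"

definition quasicont_at :: "('a::topological_space \<Rightarrow> 'b::topological_space) \<Rightarrow> 'a \<Rightarrow> bool" where
  "quasicont_at g a \<longleftrightarrow>
     (\<forall>U W. open U \<and> a \<in> U \<and> open W \<and> g a \<in> W \<longrightarrow>
        (\<exists>V. open V \<and> V \<noteq> {} \<and> V \<subseteq> U \<and> g ` V \<subseteq> W))"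

end

theory Submission
  imports Defs
begin

lemma dense_meet:
  assumes "closure D = UNIV" "open S" "S \<noteq> {}"
  shows "S \<inter> D \<noteq> {}"
  using open_Int_closure_eq_empty[OF assms(2), of D] assms by auto

lemma dense_intro:
  assumes "\<And>S. open S \<Longrightarrow> S \<noteq> {} \<Longrightarrow> S \<inter> D \<noteq> {}"
  shows "closure D = UNIV"
proof -
  have "interior (- D) = {}"
  proof (rule ccontr)
    assume "interior (- D) \<noteq> {}"
    then have "interior (- D) \<inter> D \<noteq> {}" using assms[of "interior (-D)"] by auto
    then show False using interior_subset[of "-D"] by auto
  qed
  then show ?thesis by (simp add: closure_interior)
qed

lemma five_div: "5*(1/(5*x)) = 1/(x::real)" by simp

lemma key:
  fixes f :: "'a::topological_space \<times> 'b::topological_space \<Rightarrow> 'c::metric_space"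
    and V :: "nat \<Rightarrow> 'b set"
  assumes baire: "baire_space TYPE('a)"
    and cont: "\<And>x. continuous_on UNIV (\<lambda>y. f (x, y))"
    and qc: "\<And>x. \<exists>D. closure D = UNIV \<and> (\<forall>y\<in>D. quasicont_at (\<lambda>x'. f (x', y)) x)"
    and Vopen: "\<And>n. open (V n)" and Vy0: "\<And>n. y0 \<in> V n"
    and Vbasis: "\<And>S. open S \<Longrightarrow> y0 \<in> S \<Longrightarrow> \<exists>n. V n \<subseteq> S"
    and U: "open U" "U \<noteq> {}" and e: "e > 0"
  shows "\<exists>W n c. open W \<and> W \<noteq> {} \<and> W \<subseteq> U \<and> (\<forall>x\<in>W. \<forall>y\<in>V n. dist (f (x,y)) c \<le> 5*e)"
proof -
  have opv: "open ((\<lambda>y. f (x, y)) -` ball c r)" for x c r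
    using cont[of x] continuous_on_open_vimage[of UNIV "\<lambda>y. f (x, y)"] by auto
  define F where "F n = {x. \<forall>y\<in>V n. dist (f(x,y)) (f(x,y0)) \<le> e}" for n
  have cover: "\<exists>n. x \<in> F n" for x
  proof -
    obtain n where "V n \<subseteq> (\<lambda>y. f (x, y)) -` ball (f (x,y0)) e"
      using Vbasis[OF opv] e by fastforce
    then have "x \<in> F n" unfolding F_def by (auto simp: dist_commute less_imp_le)
    then show ?thesis ..
  qed
  have "\<exists>n W0. open W0 \<and> W0 \<noteq> {} \<and> W0 \<subseteq> U \<and> (\<forall>G. open G \<and> G \<noteq> {} \<and> G \<subseteq> W0 \<longrightarrow> G \<inter> F n \<noteq> {})"
  proof (rule ccontr)
    assume nex: "\<not> ?thesis"
    define Op where "Op n = - closure (F n \<inter> U)" for n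
    have dO: "closure (Op n) = UNIV" for n
    proof -
      have "interior (closure (F n \<inter> U)) = {}"
      proof (rule ccontr)
        let ?W1 = "interior (closure (F n \<inter> U))"
        assume "?W1 \<noteq> {}"
        have "?W1 \<subseteq> closure U"
          using interior_subset closure_mono[of "F n \<inter> U" U] by blast
        then have "?W1 \<inter> U \<noteq> {}"
          using open_Int_closure_eq_empty[of ?W1 U] \<open>?W1 \<noteq> {}\<close> by auto
        moreover have "G \<inter> F n \<noteq> {}" if "open G" "G \<noteq> {}" "G \<subseteq> ?W1 \<inter> U" for G
        proof -
          have "G \<inter> closure (F n \<inter> U) \<noteq> {}" using that interior_subset by blast
          then have "G \<inter> (F n \<inter> U) \<noteq> {}" using open_Int_closure_eq_empty[OF \<open>open G\<close>] by blast
          then show ?thesis by blast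
        qed
        moreover have "open (?W1 \<inter> U)" using U(1) by (intro open_Int open_interior)
        moreover have "?W1 \<inter> U \<subseteq> U" by (rule Int_lower2)
        ultimately have "\<exists>W0. open W0 \<and> W0 \<noteq> {} \<and> W0 \<subseteq> U \<and> (\<forall>G. open G \<and> G \<noteq> {} \<and> G \<subseteq> W0 \<longrightarrow> G \<inter> F n \<noteq> {})"
          by (intro exI[of _ "?W1 \<inter> U"]) simp
        then show False using nex by blast
      qed
      then show ?thesis unfolding Op_def by (simp add: closure_interior)
    qed
    have "closure (\<Inter>(range Op)) = UNIV"
    proof -
      have oOp: "open (Op n)" for n unfolding Op_def by (intro open_Compl closed_closure)
      have "\<forall>U\<in>range Op. open U \<and> closure U = UNIV" using oOp dO by blast
      moreover have "countable (range Op)" by (rule countable_image) simp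
      moreover have C: "\<forall>\<F>::'a set set. countable \<F> \<and> (\<forall>U\<in>\<F>. open U \<and> closure U = UNIV)
        \<longrightarrow> closure (\<Inter>\<F>) = UNIV" using baire unfolding baire_space_def .
      ultimately show ?thesis using C[rule_format, of "range Op"] by simp
    qed
    then have "U \<inter> \<Inter>(range Op) \<noteq> {}" using dense_meet[OF _ U(1) U(2)] by blast
    then obtain x where x: "x \<in> U" "\<And>n. x \<in> Op n" by blast
    obtain n where "x \<in> F n" using cover by blast
    then have "x \<in> closure (F n \<inter> U)" using x(1) by (intro subsetD[OF closure_subset] IntI)
    then show False using x(2)[of n] by (simp add: Op_def)
  qed
  then obtain n W0 where W0all: "open W0 \<and> W0 \<noteq> {} \<and> W0 \<subseteq> U \<and> (\<forall>G. open G \<and> G \<noteq> {} \<and> G \<subseteq> W0 \<longrightarrow> G \<inter> F n \<noteq> {})"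
    by (elim exE)
  have W0: "open W0" "W0 \<noteq> {}" "W0 \<subseteq> U" using W0all by simp_all
  have dn: "G \<inter> F n \<noteq> {}" if "open G" "G \<noteq> {}" "G \<subseteq> W0" for G
    using W0all that by simp
  obtain x1 where x1: "x1 \<in> W0" "x1 \<in> F n" using dn[OF W0(1,2)] by blast
  obtain D1 where D1: "closure D1 = UNIV" "\<forall>y\<in>D1. quasicont_at (\<lambda>x'. f (x', y)) x1"
    using qc by blast
  obtain y1 where y1: "y1 \<in> V n" "y1 \<in> D1" using dense_meet[OF D1(1) Vopen] Vy0 by blast
  define c where "c = f (x1, y1)"
  have q1: "quasicont_at (\<lambda>x'. f (x', y1)) x1" using D1(2) y1(2) by blast
  have "\<exists>V. open V \<and> V \<noteq> {} \<and> V \<subseteq> W0 \<and> (\<lambda>x'. f (x', y1)) ` V \<subseteq> ball c e"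
    using q1 unfolding quasicont_at_def
    apply (drule_tac x=W0 in spec, drule_tac x="ball c e" in spec)
    using W0(1) x1(1) e by (simp add: c_def)
  then obtain G where G: "open G" "G \<noteq> {}" "G \<subseteq> W0" "(\<lambda>x'. f (x', y1)) ` G \<subseteq> ball c e"
    by blast
  have three: "dist (f(x,y)) c \<le> 3*e" if "x \<in> G" "x \<in> F n" "y \<in> V n" for x y
  proof -
    have a: "dist (f(x,y)) (f(x,y0)) \<le> e" using that unfolding F_def by auto
    have b: "dist (f(x,y0)) (f(x,y1)) \<le> e" using that y1 unfolding F_def by (auto simp: dist_commute)
    have d: "dist (f(x,y1)) c < e" using G(4) that by (auto simp: dist_commute)
    have t1: "dist (f(x,y)) c \<le> dist (f(x,y)) (f(x,y0)) + dist (f(x,y0)) c" by (rule dist_triangle)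
    have t2: "dist (f(x,y0)) c \<le> dist (f(x,y0)) (f(x,y1)) + dist (f(x,y1)) c" by (rule dist_triangle)
    from t1 t2 have "dist (f(x,y)) c \<le> dist (f(x,y)) (f(x,y0)) + dist (f(x,y0)) (f(x,y1)) + dist (f(x,y1)) c"
      by linarith
    then show ?thesis using a b d by linarith
  qed
  have five: "dist (f(x,y)) c \<le> 5*e" if "x \<in> G" "y \<in> V n" for x y
  proof -
    obtain D where D: "closure D = UNIV" "\<forall>y\<in>D. quasicont_at (\<lambda>x'. f (x', y)) x"
      using qc by blast
    let ?S = "V n \<inter> (\<lambda>y. f (x, y)) -` ball (f(x,y)) e"
    have oS: "open ?S" using Vopen opv by blast
    have yS: "y \<in> ?S" using that e by auto
    have "?S \<inter> D \<noteq> {}" using dense_meet[OF D(1) oS] yS by blast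
    then obtain y' where y'S: "y' \<in> ?S" "y' \<in> D" by blast
    have y': "y' \<in> V n" "y' \<in> D" "dist (f(x,y)) (f(x,y')) < e"
      using y'S by (auto simp: dist_commute)
    have q2: "quasicont_at (\<lambda>x'. f (x', y')) x" using D(2) y'(2) by blast
    have "\<exists>V. open V \<and> V \<noteq> {} \<and> V \<subseteq> G \<and> (\<lambda>x'. f (x', y')) ` V \<subseteq> ball (f(x,y')) e"
      using q2 unfolding quasicont_at_def
      apply (drule_tac x=G in spec, drule_tac x="ball (f(x,y')) e" in spec)
      using G(1) that(1) e by simp
    then obtain G' where G': "open G'" "G' \<noteq> {}" "G' \<subseteq> G" "(\<lambda>x'. f (x', y')) ` G' \<subseteq> ball (f(x,y')) e"
      by blast
    have "G' \<subseteq> W0" using G'(3) G(3) by (rule order_trans)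
    from dn[OF G'(1,2) this] obtain x'' where x'': "x'' \<in> G'" "x'' \<in> F n" by blast
    have "x'' \<in> G" using G'(3) x''(1) by (rule subsetD)
    from three[OF this x''(2) y'(1)] have p: "dist (f(x'',y')) c \<le> 3*e" .
    have q: "dist (f(x,y')) (f(x'',y')) < e" using G'(4) x''(1) by auto
    have t1: "dist (f(x,y)) c \<le> dist (f(x,y)) (f(x,y')) + dist (f(x,y')) c" by (rule dist_triangle)
    have t2: "dist (f(x,y')) c \<le> dist (f(x,y')) (f(x'',y')) + dist (f(x'',y')) c" by (rule dist_triangle)
    from t1 t2 have "dist (f(x,y)) c \<le> dist (f(x,y)) (f(x,y')) + dist (f(x,y')) (f(x'',y')) + dist (f(x'',y')) c"
      by linarith
    then show ?thesis using p q y'(3) by linarith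
  qed
  have all5: "\<forall>x\<in>G. \<forall>y\<in>V n. dist (f (x,y)) c \<le> 5*e" using five by blast
  have "G \<subseteq> U" using G(3) W0(3) by (rule order_trans)
  with all5 G(1,2) show ?thesis by (intro exI[of _ G] exI[of _ n] exI[of _ c]) simp
qed

theorem theorem4p1:
  fixes f :: "'a::topological_space \<times> 'b::first_countable_topology \<Rightarrow> 'c::metric_space"
  assumes "baire_space TYPE('a)"
    and "\<And>x. continuous_on UNIV (\<lambda>y. f (x, y))"
    and "\<And>x. \<exists>D. closure D = UNIV \<and> (\<forall>y\<in>D. quasicont_at (\<lambda>x'. f (x', y)) x)"
  shows "\<forall>y. \<exists>R. residual R \<and> (\<forall>x\<in>R. (f \<longlongrightarrow> f (x, y)) (at (x, y)))"
proof
  fix y0 :: 'b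
  obtain V :: "nat \<Rightarrow> 'b set" where V': "\<forall>i. y0 \<in> V i \<and> open (V i)"
    "\<forall>S. open S \<and> y0 \<in> S \<longrightarrow> (\<exists>i. V i \<subseteq> S)"
    using first_countable_basis[of y0] by (elim exE conjE)
  have V: "\<And>n. y0 \<in> V n" "\<And>n. open (V n)"
    "\<And>S. open S \<Longrightarrow> y0 \<in> S \<Longrightarrow> \<exists>n. V n \<subseteq> S"
    using V' by simp_all
  define Op where "Op k = \<Union>{W. open W \<and> (\<exists>n c. \<forall>x\<in>W. \<forall>y\<in>V n. dist (f (x,y)) c \<le> 1/(Suc k))}" for k
  have oO: "open (Op k)" for k unfolding Op_def by auto
  have dO: "closure (Op k) = UNIV" for k
  proof (rule dense_intro)
    fix U :: "'a set" assume U: "open U" "U \<noteq> {}"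
    have "(0::real) < 1/(5*real (Suc k))" by simp
    from key[OF assms V(2) V(1) V(3) U this] obtain W n c where
      W: "open W" "W \<noteq> {}" "W \<subseteq> U" "\<forall>x\<in>W. \<forall>y\<in>V n. dist (f (x,y)) c \<le> 5*(1/(5*real (Suc k)))"
      by blast
    have "5*(1/(5*real (Suc k))) = 1/(Suc k :: real)" by (rule five_div)
    then have "\<forall>x\<in>W. \<forall>y\<in>V n. dist (f (x,y)) c \<le> 1/(Suc k)" using W(4) by simp
    then have "W \<subseteq> Op k" unfolding Op_def using W(1) by blast
    then show "U \<inter> Op k \<noteq> {}" using W by blast
  qed
  define R where "R = \<Inter>(range Op)"
  have "residual R" unfolding residual_def R_def
    using oO dO by (intro exI[of _ "range Op"]) auto
  moreover have "(f \<longlongrightarrow> f (x, y0)) (at (x, y0))" if "x \<in> R" for x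
  proof (rule tendstoI)
    fix e :: real assume e: "e > 0"
    obtain k :: nat where k: "2 / Suc k < e"
    proof -
      from reals_Archimedean[OF half_gt_zero[OF e]] obtain k where "inverse (real (Suc k)) < e/2" by (elim exE)
      then have "2 / real (Suc k) < e" by (simp add: inverse_eq_divide)
      then show ?thesis by (rule that)
    qed
    have "x \<in> Op k" using that unfolding R_def by (rule InterD) simp
    then obtain W where W0: "W \<in> {W. open W \<and> (\<exists>n c. \<forall>x\<in>W. \<forall>y\<in>V n. dist (f (x,y)) c \<le> 1/(Suc k))}" "x \<in> W"
      unfolding Op_def by (rule UnionE)
    then have Wp: "open W" "\<exists>n c. \<forall>x\<in>W. \<forall>y\<in>V n. dist (f (x,y)) c \<le> 1/(Suc k)" by simp_all
    from Wp(2) obtain n c where Wc: "\<forall>x\<in>W. \<forall>y\<in>V n. dist (f (x,y)) c \<le> 1/(Suc k)"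
      by (elim exE)
    note W = Wp(1) W0(2) Wc
    have "\<forall>p\<in>W \<times> V n. dist (f p) (f (x, y0)) < e"
    proof
      fix p assume p: "p \<in> W \<times> V n"
      have "dist (f p) c \<le> 1/Suc k" using W(3) p by auto
      moreover have "dist (f (x,y0)) c \<le> 1/Suc k" using W(2,3) V(1) by auto
      ultimately have "dist (f p) (f (x, y0)) \<le> 2/Suc k"
        using dist_triangle2[of "f p" "f (x,y0)" c] by simp
      then show "dist (f p) (f (x, y0)) < e" using k by linarith
    qed
    moreover have "open (W \<times> V n)" "(x,y0) \<in> W \<times> V n" using W V by (auto intro: open_Times)
    ultimately show "\<forall>\<^sub>F p in at (x, y0). dist (f p) (f (x, y0)) < e"
      unfolding eventually_at_topological by (intro exI[of _ "W \<times> V n"]) simp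
  qed
  ultimately show "\<exists>R. residual R \<and> (\<forall>x\<in>R. (f \<longlongrightarrow> f (x, y0)) (at (x, y0)))" by blast
qed

end
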